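(* Let $n\ge2$, let $\sigma,\tau\in S_n$, and let $u,v,w\in\{1,\dots,n\}$. Then: 1. $M(\sigma,u,0)M(\tau,v,0)=M(\tau\sigma,w,0)$. 2. $M(\sigma,u,1)M(\tau,v,0)=M(\tau\sigma,u,1)$. 3. $M(\sigma,u,0)M(\tau,v,1)=M(\tau\sigma,\sigma^{-1}(v),1)$. 4. If $\sigma^{-1}(v)=u$, then $M(\sigma,u,1)M(\tau,v,1)=M(\tau\sigma,w,0)$. 5. If $\sigma^{-1}(v)\ne u$, then $M(\sigma,u,1)M(\tau,v,1)=M(\eta,\sigma^{-1}(v),1)$, where $\eta\in S_n$ is defined by $$\eta(j)=\begin{cases}\tau\sigma(j),& j\notin\{u,\sigma^{-1}(v)\},\\ \tau\sigma(u),& j=\sigma^{-1}(v),\\ \tau(v),& j=u.\end{cases}$$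
   Context: - $e_j$ is the $j$-th standard basis column vector of $\mathbb{Z}^n$. - $r_h$ is the row vector $\big((-1)^h,(-1)^{h+1},\dots,(-1)^{h+n-1}\big)$, whose $k$-th entry is $(-1)^{h+k-1}$. - Permutations are composed as functions: $(\tau\sigma)(j)=\tau(\sigma(j))$. - For $\sigma\in S_n$, $h\in\{1,\dots,n\}$ and $\epsilon\in\{0,1\}$, $M(\sigma,h,\epsilon)$ is the $n\times n$ matrix $$M(\sigma,h,\epsilon)=\sum_{j=1}^n(-1)^{j+\sigma(j)}e_je_{\sigma(j)}^T+\epsilon\Big((-1)^{h+\sigma(h)+1}e_he_{\sigma(h)}^T+e_hr_h\Big).$$ - Thus $M(\sigma,h,0)$ is the signed permutation matrix with entry $(-1)^{j+\sigma(j)}$ at position $(j,\sigma(j))$ and zeros elsewhere; it does not depend on $h$. - $M(\sigma,h,1)$ is obtained from $M(\sigma,h,0)$ by replacing its $h$-th row with $r_h$. *)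

theory Defs
  imports "Jordan_Normal_Form.Matrix" "HOL-Combinatorics.Permutations"
begin

text \<open>Entry (j,k) (1-based, j,k in {1..n}) of M(sigma,h,eps), following the defining sum literally:
  sum_i (-1)^(i+sigma i) e_i e_(sigma i)^T + eps((-1)^(h+sigma h+1) e_h e_(sigma h)^T + e_h r_h),
  where r_h has k-th entry (-1)^(h+k-1).\<close>
definition Mentry :: "(nat \<Rightarrow> nat) \<Rightarrow> nat \<Rightarrow> int \<Rightarrow> nat \<Rightarrow> nat \<Rightarrow> int" where
  "Mentry \<sigma> h \<epsilon> j k =
     (if \<sigma> j = k then (-1) ^ (j + \<sigma> j) else 0)
     + \<epsilon> * ((if j = h \<and> k = \<sigma> h then (-1) ^ (h + \<sigma> h + 1) else 0)
            + (if j = h then (-1) ^ (h + k - 1) else 0))"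

text \<open>The n x n integer matrix M(sigma,h,eps); Jordan_Normal_Form matrices are 0-indexed,
  so the 0-based entry (i,j) is the 1-based entry (i+1,j+1).\<close>
definition Mmat :: "nat \<Rightarrow> (nat \<Rightarrow> nat) \<Rightarrow> nat \<Rightarrow> int \<Rightarrow> int mat" where
  "Mmat n \<sigma> h \<epsilon> = mat n n (\<lambda>(i, j). Mentry \<sigma> h \<epsilon> (i + 1) (j + 1))"

end

theory Submission
  imports Defs
begin

lemma entry:
  assumes "i < n" "k < n"
  shows "(Mmat n \<sigma> h e * Mmat n \<tau> h' e') $$ (i,k) = (\<Sum>l\<in>{1..n}. Mentry \<sigma> h e (i+1) l * Mentry \<tau> h' e' l (k+1))"
proof -
  have "(Mmat n \<sigma> h e * Mmat n \<tau> h' e') $$ (i,k) = (\<Sum>l<n. Mentry \<sigma> h e (i+1) (l+1) * Mentry \<tau> h' e' (l+1) (k+1))"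
    using assms by (simp add: Mmat_def scalar_prod_def lessThan_atLeast0)
  also have "\<dots> = (\<Sum>l\<in>{1..n}. Mentry \<sigma> h e (i+1) l * Mentry \<tau> h' e' l (k+1))"
    by (rule sum.reindex_bij_witness[where i="\<lambda>l. l - 1" and j="\<lambda>l. l+1"]) auto
  finally show ?thesis .
qed

definition P :: "(nat \<Rightarrow> nat) \<Rightarrow> nat \<Rightarrow> nat \<Rightarrow> int" where
  "P \<sigma> j k = (if \<sigma> j = k then (-1)^(j+k) else 0)"

lemma M0: "Mentry \<sigma> h 0 j k = P \<sigma> j k"
  by (simp add: Mentry_def P_def)

lemma M1: "Mentry \<sigma> h 1 j k = (if j = h then (-1)^(h+k-1) else P \<sigma> j k)"
  by (auto simp add: Mentry_def P_def minus_one_power_iff; presburger)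

lemma sg: "even (a+b) = even c \<Longrightarrow> (-1::int)^a * (-1)^b = (-1)^c"
  by (auto simp add: power_add[symmetric] minus_one_power_iff)

lemma sumP_left:
  assumes "\<sigma> permutes {1..n}" "j \<in> {1..n}"
  shows "(\<Sum>l\<in>{1..n}. P \<sigma> j l * f l) = (-1)^(j+\<sigma> j) * f (\<sigma> j)"
proof -
  have "\<sigma> j \<in> {1..n}" using permutes_in_image[OF assms(1)] assms(2) by blast
  then show ?thesis
    by (simp add: P_def if_distrib[of "\<lambda>x. x * _"] sum.delta cong: if_cong)
qed

lemma sumP_right:
  assumes "\<tau> permutes {1..n}" "k \<in> {1..n}"
  shows "(\<Sum>l\<in>{1..n}. g l * P \<tau> l k) = g (Hilbert_Choice.inv \<tau> k) * (-1)^(Hilbert_Choice.inv \<tau> k + k)"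
proof -
  have e: "\<tau> l = k \<longleftrightarrow> Hilbert_Choice.inv \<tau> k = l" for l using permutes_inv_eq[OF assms(1)] by metis
  have "Hilbert_Choice.inv \<tau> k \<in> {1..n}" using permutes_in_image[OF permutes_inv[OF assms(1)]] assms(2) by blast
  then show ?thesis
    by (simp add: P_def e if_distrib[of "\<lambda>x. _ * x"] sum.delta cong: if_cong)
qed

lemma sum_upd:
  fixes n :: nat and g B :: "nat \<Rightarrow> int" and r :: int
  assumes "v \<in> {1..n}"
  shows "(\<Sum>l\<in>{1..n}. g l * (if l = v then r else B l)) = (\<Sum>l\<in>{1..n}. g l * B l) - g v * B v + g v * r"
proof -
  have a: "(\<Sum>l\<in>{1..n}. g l * (if l = v then r else B l)) = g v * r + (\<Sum>l\<in>{1..n}-{v}. g l * (if l = v then r else B l))"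
    using sum.remove[of "{1..n}" v "\<lambda>l. g l * (if l = v then r else B l)"] assms by auto
  have b: "(\<Sum>l\<in>{1..n}-{v}. g l * (if l = v then r else B l)) = (\<Sum>l\<in>{1..n}-{v}. g l * B l)"
    by (rule sum.cong) auto
  have c: "(\<Sum>l\<in>{1..n}. g l * B l) = g v * B v + (\<Sum>l\<in>{1..n}-{v}. g l * B l)"
    using sum.remove[of "{1..n}" v "\<lambda>l. g l * B l"] assms by auto
  show ?thesis using a b c by simp
qed


lemma mat_eqI':
  assumes "\<And>j k. j \<in> {1..n} \<Longrightarrow> k \<in> {1..n} \<Longrightarrow>
     (\<Sum>l\<in>{1..n}. Mentry \<sigma> h e j l * Mentry \<tau> h' e' l k) = Mentry \<rho> g f j k"
  shows "Mmat n \<sigma> h e * Mmat n \<tau> h' e' = Mmat n \<rho> g f"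
proof (rule eq_matI)
  fix i k assume "i < dim_row (Mmat n \<rho> g f)" "k < dim_col (Mmat n \<rho> g f)"
  hence ik: "i < n" "k < n" by (simp_all add: Mmat_def)
  have "(Mmat n \<sigma> h e * Mmat n \<tau> h' e') $$ (i, k) = (\<Sum>l\<in>{1..n}. Mentry \<sigma> h e (i+1) l * Mentry \<tau> h' e' l (k+1))"
      by (rule entry[OF ik])
    also have "\<dots> = Mentry \<rho> g f (i+1) (k+1)" using assms[of "i+1" "k+1"] ik by simp
    also have "\<dots> = Mmat n \<rho> g f $$ (i, k)" using ik by (simp add: Mmat_def)
    finally show "(Mmat n \<sigma> h e * Mmat n \<tau> h' e') $$ (i, k) = Mmat n \<rho> g f $$ (i, k)" .
qed (simp_all add: Mmat_def)

lemma par: "even (a+b) = even c \<Longrightarrow> (-1::int)^a * (-1)^b = (-1)^c" by (rule sg)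

theorem mainTheorem11:
  fixes n u v w :: nat and \<sigma> \<tau> :: "nat \<Rightarrow> nat"
  assumes "n \<ge> 2"
    and "\<sigma> permutes {1..n}" and "\<tau> permutes {1..n}"
    and "u \<in> {1..n}" and "v \<in> {1..n}" and "w \<in> {1..n}"
  shows "Mmat n \<sigma> u 0 * Mmat n \<tau> v 0 = Mmat n (\<tau> \<circ> \<sigma>) w 0
    \<and> Mmat n \<sigma> u 1 * Mmat n \<tau> v 0 = Mmat n (\<tau> \<circ> \<sigma>) u 1
    \<and> Mmat n \<sigma> u 0 * Mmat n \<tau> v 1 = Mmat n (\<tau> \<circ> \<sigma>) (Hilbert_Choice.inv \<sigma> v) 1
    \<and> (Hilbert_Choice.inv \<sigma> v = u \<longrightarrow>
         Mmat n \<sigma> u 1 * Mmat n \<tau> v 1 = Mmat n (\<tau> \<circ> \<sigma>) w 0)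
    \<and> (Hilbert_Choice.inv \<sigma> v \<noteq> u \<longrightarrow>
         Mmat n \<sigma> u 1 * Mmat n \<tau> v 1 =
         Mmat n (\<lambda>j. if j = Hilbert_Choice.inv \<sigma> v then \<tau> (\<sigma> u)
                     else if j = u then \<tau> v
                     else \<tau> (\<sigma> j)) (Hilbert_Choice.inv \<sigma> v) 1)"
proof -
  note sp = assms(2) and tp = assms(3)
  let ?iv = "Hilbert_Choice.inv \<sigma> v"
  have ivS: "?iv \<in> {1..n}" using permutes_in_image[OF permutes_inv[OF sp]] assms(5) by blast
  have siv: "\<sigma> ?iv = v" using permutes_inverses(1)[OF sp] by metis
  have iv_iff: "\<sigma> j = v \<longleftrightarrow> j = ?iv" for j using permutes_inv_eq[OF sp] by metis
  have sS: "\<sigma> j \<in> {1..n}" if "j \<in> {1..n}" for j using permutes_in_image[OF sp] that by blast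
  have tS: "\<tau> j \<in> {1..n}" if "j \<in> {1..n}" for j using permutes_in_image[OF tp] that by blast
  have tiS: "Hilbert_Choice.inv \<tau> j \<in> {1..n}" if "j \<in> {1..n}" for j
    using permutes_in_image[OF permutes_inv[OF tp]] that by blast
  have tti: "\<tau> (Hilbert_Choice.inv \<tau> j) = j" for j using permutes_inverses(1)[OF tp] by metis
  have rowP: "(\<Sum>l\<in>{1..n}. P \<sigma> j l * P \<tau> l k) = P (\<tau> \<circ> \<sigma>) j k" if "j \<in> {1..n}" for j k
    using that by (subst sumP_left[OF sp that]) (auto simp: P_def intro!: par)
  have rowR: "(\<Sum>l\<in>{1..n}. (-1)^(h+l-1) * P \<tau> l k) = (-1::int)^(h+k-1)" if "k \<in> {1..n}" "h \<in> {1..n}" for h k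
    using that tiS[OF that(1)] by (subst sumP_right[OF tp that(1)]) (auto simp: tti intro!: par)
  have rowPM: "(\<Sum>l\<in>{1..n}. P \<sigma> j l * Mentry \<tau> v 1 l k) = (if j = ?iv then (-1)^(j+k-1) else P (\<tau> \<circ> \<sigma>) j k)"
    if "j \<in> {1..n}" "k \<in> {1..n}" for j k
    using that sS[OF that(1)] by (subst sumP_left[OF sp that(1)]) (auto simp add: M1 P_def iv_iff siv intro!: par)
  have rowRM: "(\<Sum>l\<in>{1..n}. (-1)^(u+l-1) * Mentry \<tau> v 1 l k) = (if \<tau> v = k then (-1::int)^(u+k) else 0)"
    if "k \<in> {1..n}" for k
  proof -
    have "(\<Sum>l\<in>{1..n}. (-1)^(u+l-1) * Mentry \<tau> v 1 l k) = (\<Sum>l\<in>{1..n}. (-1)^(u+l-1) * (if l = v then (-1)^(v+k-1) else P \<tau> l k))"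
      by (simp add: M1)
    also have "\<dots> = (-1::int)^(u+k-1) - (-1)^(u+v-1) * P \<tau> v k + (-1)^(u+v-1) * (-1)^(v+k-1)"
      using sum_upd[OF assms(5)] rowR[OF that assms(4)] by simp
    also have "\<dots> = (if \<tau> v = k then (-1::int)^(u+k) else 0)"
      using that assms(4,5) by (auto simp add: P_def minus_one_power_iff; presburger)
    finally show ?thesis .
  qed
  have p1: "Mmat n \<sigma> u 0 * Mmat n \<tau> v 0 = Mmat n (\<tau> \<circ> \<sigma>) w 0"
    by (rule mat_eqI') (unfold M0, rule rowP)
  have p2: "Mmat n \<sigma> u 1 * Mmat n \<tau> v 0 = Mmat n (\<tau> \<circ> \<sigma>) u 1"
  proof (rule mat_eqI')
    fix j k assume jk: "j \<in> {1..n}" "k \<in> {1..n}"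
    show "(\<Sum>l\<in>{1..n}. Mentry \<sigma> u 1 j l * Mentry \<tau> v 0 l k) = Mentry (\<tau> \<circ> \<sigma>) u 1 j k"
    proof (cases "j = u")
      case True
      then show ?thesis unfolding M0 M1 using rowR[OF jk(2) assms(4)] by simp
    next
      case False
      then show ?thesis unfolding M0 M1 using rowP[OF jk(1)] by simp
    qed
  qed
  have p3: "Mmat n \<sigma> u 0 * Mmat n \<tau> v 1 = Mmat n (\<tau> \<circ> \<sigma>) ?iv 1"
  proof (rule mat_eqI')
    fix j k assume jk: "j \<in> {1..n}" "k \<in> {1..n}"
    show "(\<Sum>l\<in>{1..n}. Mentry \<sigma> u 0 j l * Mentry \<tau> v 1 l k) = Mentry (\<tau> \<circ> \<sigma>) ?iv 1 j k"
      unfolding M0 using rowPM[OF jk] by (simp add: M1)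
  qed
  have p4: "?iv = u \<longrightarrow> Mmat n \<sigma> u 1 * Mmat n \<tau> v 1 = Mmat n (\<tau> \<circ> \<sigma>) w 0"
  proof
    assume h: "?iv = u"
    show "Mmat n \<sigma> u 1 * Mmat n \<tau> v 1 = Mmat n (\<tau> \<circ> \<sigma>) w 0"
    proof (rule mat_eqI')
      fix j k assume jk: "j \<in> {1..n}" "k \<in> {1..n}"
      show "(\<Sum>l\<in>{1..n}. Mentry \<sigma> u 1 j l * Mentry \<tau> v 1 l k) = Mentry (\<tau> \<circ> \<sigma>) w 0 j k"
      proof (cases "j = u")
        case True
        then show ?thesis using rowRM[OF jk(2)] siv h by (simp add: M1 M0 P_def)
      next
        case False
        then show ?thesis using rowPM[OF jk] h by (simp add: M1 M0)
      qed
    qed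
  qed
  have p5: "?iv \<noteq> u \<longrightarrow>  Mmat n \<sigma> u 1 * Mmat n \<tau> v 1 =
         Mmat n (\<lambda>j. if j = ?iv then \<tau> (\<sigma> u) else if j = u then \<tau> v else \<tau> (\<sigma> j)) ?iv 1"
  proof
    assume h: "?iv \<noteq> u"
    show "Mmat n \<sigma> u 1 * Mmat n \<tau> v 1 =
         Mmat n (\<lambda>j. if j = ?iv then \<tau> (\<sigma> u) else if j = u then \<tau> v else \<tau> (\<sigma> j)) ?iv 1"
    proof (rule mat_eqI')
      fix j k assume jk: "j \<in> {1..n}" "k \<in> {1..n}"
      show "(\<Sum>l\<in>{1..n}. Mentry \<sigma> u 1 j l * Mentry \<tau> v 1 l k) =
         Mentry (\<lambda>j. if j = ?iv then \<tau> (\<sigma> u) else if j = u then \<tau> v else \<tau> (\<sigma> j)) ?iv 1 j k"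
      proof (cases "j = u")
        case True
        then show ?thesis using rowRM[OF jk(2)] h by (simp add: M1 P_def)
      next
        case False
        then show ?thesis using rowPM[OF jk] h by (simp add: M1 P_def)
      qed
    qed
  qed
  show ?thesis using p1 p2 p3 p4 p5 by blast
qed

end
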